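(* Let $\mathcal C\subseteq\mathbb R^{h\times p}$ be closed and convex with $W^\star\in\mathcal C$, and $\mathcal T$ its feasible ball. Let $U\in\mathcal C$ and suppose $\nabla\mathcal L(U)=(H_1+H_2+H_3)\,\mathrm{vec}(U-W^\star)$ where $H_1,H_2,H_3\in\mathbb R^{hp\times hp}$, $H_1$ symmetric with $0\preceq H_1\preceq\alpha I_{hp}$, $\|H_2+H_3\|\le\varepsilon$, and $\inf_{\mathbf v\in\mathcal T,\mathbf v\ne0}\mathbf v^TH_1\mathbf v/\|\mathbf v\|_2^2\ge\beta$, with $\beta\ge10\varepsilon$. Then $\hat U=\mathcal P_{\mathcal C}(U-\frac1\alpha\nabla\mathcal L(U))$ satisfies $\|\hat U-W^\star\|_F^2\le(1-\frac{\beta}{2\alpha})\|U-W^\star\|_F^2$.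
   Context: Matrices in $\mathbb R^{h\times p}$ are identified with vectors in $\mathbb R^{hp}$ (vec stacks rows). $\mathcal P_{\mathcal C}$ is Frobenius projection. Feasible ball: $\mathcal T=\mathcal B^{h\times p}\cap\mathrm{cl}\{\alpha U: W^\star+U\in\mathcal C,\alpha\ge0\}$ with $\mathcal B^{h\times p}$ the unit Frobenius ball. $\|\cdot\|$ is the spectral norm. *)

theory Defs
  imports "HOL-Analysis.Analysis"
begin

text \<open>Matrices in R^{h x p} are modelled as real^'p^'h (rows indexed by 'h);
  the library norm on this type is the Frobenius norm.
  vec stacks rows: index (i,j) of R^{hp} is entry i,j.\<close>

definition vecm :: "real^'p^'h \<Rightarrow> real^('h \<times> 'p)" where
  "vecm U = (\<chi> ij. U $ fst ij $ snd ij)"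

definition proj_C :: "(real^'p^'h) set \<Rightarrow> real^'p^'h \<Rightarrow> real^'p^'h" where
  "proj_C C X = closest_point C X"

definition feasible_ball :: "(real^'p^'h) set \<Rightarrow> real^'p^'h \<Rightarrow> (real^'p^'h) set" where
  "feasible_ball C W = cball 0 1 \<inter> closure {a *\<^sub>R V | a V. W + V \<in> C \<and> a \<ge> 0}"

definition spec_norm :: "real^'n^'n \<Rightarrow> real" where
  "spec_norm M = onorm (\<lambda>x. M *v x)"

definition loewner_le :: "real^'n^'n \<Rightarrow> real^'n^'n \<Rightarrow> bool" where
  "loewner_le A B \<longleftrightarrow> (\<forall>x. 0 \<le> x \<bullet> ((B - A) *v x))"

end

theory Submission imports Defs begin

lemma vecm_inner: "vecm X \<bullet> vecm Y = X \<bullet> Y"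
  unfolding vecm_def inner_vec_def
  by (simp add: UNIV_Times_UNIV[symmetric] sum.cartesian_product split_beta del: UNIV_Times_UNIV)

lemma norm_vecm: "norm (vecm X) = norm X"
  by (simp add: norm_eq_sqrt_inner vecm_inner)

lemma vecm_diff: "vecm (X - Y) = vecm X - vecm Y"
  by (simp add: vecm_def vec_eq_iff)

lemma vecm_scale: "vecm (c *\<^sub>R X) = c *\<^sub>R vecm X"
  by (simp add: vecm_def vec_eq_iff)

lemma sym_inner:
  assumes "transpose H = H"
  shows "x \<bullet> (H *v y) = (H *v x) \<bullet> (y::real^'n)"
  by (metis assms dot_lmul_matrix transpose_matrix_vector)

lemma psd_cs:
  fixes M :: "real^'n^'n"
  assumes sym: "transpose M = M" and psd: "\<And>z. 0 \<le> z \<bullet> (M *v z)"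
  shows "(x \<bullet> (M *v y))\<^sup>2 \<le> (x \<bullet> (M *v x)) * (y \<bullet> (M *v y))"
proof -
  define a where "a = x \<bullet> (M *v x)"
  define b where "b = x \<bullet> (M *v y)"
  define c where "c = y \<bullet> (M *v y)"
  have q: "0 \<le> a + 2 * b * t + c * t\<^sup>2" for t
  proof -
    have "0 \<le> (x + t *\<^sub>R y) \<bullet> (M *v (x + t *\<^sub>R y))" by (rule psd)
    also have "\<dots> = a + 2 * b * t + c * t\<^sup>2"
    proof -
      have "y \<bullet> (M *v x) = b" unfolding b_def using sym_inner[OF sym, of y x]
        by (simp add: inner_commute)
      thus ?thesis
        by (simp add: a_def b_def c_def matrix_vector_right_distrib matrix_vector_mult_scaleR
            inner_add_left inner_add_right power2_eq_square algebra_simps)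
    qed
    finally show ?thesis .
  qed
  have "b\<^sup>2 \<le> a * c"
  proof (cases "c = 0")
    case True
    have "b = 0"
    proof (rule ccontr)
      assume "b \<noteq> 0"
      have "0 \<le> a + 2 * b * (- (a + 1) / (2 * b))" using q[of "- (a + 1) / (2*b)"] True by simp
      also have "\<dots> = -1" using \<open>b \<noteq> 0\<close> by (simp add: field_simps)
      finally show False by simp
    qed
    thus ?thesis using True by simp
  next
    case False
    have c0: "c > 0" using False psd[of y] c_def by simp
    have "0 \<le> a + 2 * b * (-b/c) + c * (-b/c)\<^sup>2" by (rule q)
    also have "\<dots> = a - b\<^sup>2 / c" using c0 by (simp add: field_simps power2_eq_square)
    finally have "b\<^sup>2 / c \<le> a" by simp
    thus ?thesis using c0 by (simp add: field_simps mult.commute)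
  qed
  thus ?thesis by (simp add: a_def b_def c_def)
qed

lemma H_bound:
  fixes H :: "real^'n^'n"
  assumes sym: "transpose H = H" and l0: "loewner_le 0 H" and l1: "loewner_le H (\<alpha> *\<^sub>R mat 1)"
    and a: "\<alpha> > 0"
  shows "(norm (H *v d))\<^sup>2 \<le> \<alpha> * (d \<bullet> (H *v d))"
proof -
  have psd: "\<And>z. 0 \<le> z \<bullet> (H *v z)" using l0 by (simp add: loewner_le_def)
  have up: "\<And>z. z \<bullet> (H *v z) \<le> \<alpha> * (z \<bullet> z)"
  proof -
    fix z
    have "0 \<le> z \<bullet> ((\<alpha> *\<^sub>R mat 1 - H) *v z)" using l1 by (simp add: loewner_le_def)
    thus "z \<bullet> (H *v z) \<le> \<alpha> * (z \<bullet> z)"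
      by (simp add: matrix_vector_mult_diff_rdistrib inner_diff_right
          scaleR_matrix_vector_assoc[symmetric])
  qed
  define s where "s = (norm (H *v d))\<^sup>2"
  define p where "p = d \<bullet> (H *v d)"
  have e1: "d \<bullet> (H *v (H *v d)) = s"
    unfolding s_def using sym_inner[OF sym, of d "H *v d"] by (simp add: power2_norm_eq_inner)
  have "(d \<bullet> (H *v (H *v d)))\<^sup>2 \<le> p * ((H *v d) \<bullet> (H *v (H *v d)))"
    unfolding p_def by (rule psd_cs[OF sym psd])
  also have "\<dots> \<le> p * (\<alpha> * s)"
    using up[of "H *v d"] psd[of d] unfolding p_def s_def
    by (intro mult_left_mono) (auto simp: power2_norm_eq_inner)
  finally have "s * s \<le> (\<alpha> * p) * s" using e1 by (simp add: power2_eq_square algebra_simps)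
  moreover have "s \<ge> 0" by (simp add: s_def)
  ultimately have "s \<le> \<alpha> * p"
  proof (cases "s = 0")
    case True thus ?thesis using psd[of d] a unfolding p_def by simp
  next
    case False
    assume "s * s \<le> (\<alpha> * p) * s" "s \<ge> 0"
    thus ?thesis using False mult_right_le_imp_le[of s s "\<alpha> * p"] by linarith
  qed
  thus ?thesis by (simp add: s_def p_def)
qed

theorem mainTheorem9:
  fixes C :: "(real^'p^'h) set" and W U G :: "real^'p^'h"
    and H1 H2 H3 :: "real^('h \<times> 'p)^('h \<times> 'p)"
    and \<alpha> \<beta> \<epsilon> :: real
  assumes "closed C" and "convex C" and "W \<in> C" and "U \<in> C"
    and grad: "vecm G = (H1 + H2 + H3) *v vecm (U - W)"
    and "transpose H1 = H1"
    and "\<alpha> > 0"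
    and "loewner_le 0 H1" and "loewner_le H1 (\<alpha> *\<^sub>R mat 1)"
    and "spec_norm (H2 + H3) \<le> \<epsilon>"
    and "\<forall>V \<in> feasible_ball C W. V \<noteq> 0 \<longrightarrow>
           \<beta> \<le> (vecm V \<bullet> (H1 *v vecm V)) / (norm (vecm V))\<^sup>2"
    and "\<beta> \<ge> 10 * \<epsilon>"
  shows "(norm (proj_C C (U - (1 / \<alpha>) *\<^sub>R G) - W))\<^sup>2
           \<le> (1 - \<beta> / (2 * \<alpha>)) * (norm (U - W))\<^sup>2"
proof -
  note a = \<open>\<alpha> > 0\<close>
  define d where "d = vecm (U - W)"
  define n where "n = norm (U - W)"
  define E where "E = H2 + H3"
  define Y where "Y = U - (1 / \<alpha>) *\<^sub>R G"
  have nd: "norm d = n" by (simp add: d_def n_def norm_vecm)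
  have n0: "n \<ge> 0" by (simp add: n_def)
  have psd: "\<And>z. 0 \<le> z \<bullet> (H1 *v z)" using \<open>loewner_le 0 H1\<close> by (simp add: loewner_le_def)
  have bl: "bounded_linear ((*v) E)" by (rule matrix_vector_mul_bounded_linear)
  have eps0: "\<epsilon> \<ge> 0" using onorm_pos_le[OF bl] \<open>spec_norm (H2 + H3) \<le> \<epsilon>\<close>
    by (simp add: spec_norm_def E_def)
  have Ed: "norm (E *v d) \<le> \<epsilon> * n"
  proof -
    have "norm (E *v d) \<le> onorm ((*v) E) * norm d" by (rule onorm[OF bl])
    also have "\<dots> \<le> \<epsilon> * n" using \<open>spec_norm (H2 + H3) \<le> \<epsilon>\<close> nd
      using n0 by (simp add: mult_right_mono spec_norm_def E_def)
    finally show ?thesis .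
  qed
  define A where "A = d - (1/\<alpha>) *\<^sub>R (H1 *v d)"
  define B where "B = (1/\<alpha>) *\<^sub>R (E *v d)"
  have vY: "vecm (Y - W) = A - B"
  proof -
    have "Y - W = (U - W) - (1/\<alpha>) *\<^sub>R G" by (simp add: Y_def)
    hence "vecm (Y - W) = d - (1/\<alpha>) *\<^sub>R vecm G" by (simp add: vecm_diff vecm_scale d_def)
    also have "vecm G = H1 *v d + E *v d" using grad
      by (simp add: d_def E_def matrix_vector_mult_add_rdistrib)
    finally show ?thesis by (simp add: A_def B_def algebra_simps)
  qed
  have Bn: "norm B \<le> (\<epsilon> / \<alpha>) * n"
    using Ed a by (simp add: B_def divide_simps mult.commute)
  define p where "p = d \<bullet> (H1 *v d)"
  have p0: "p \<ge> 0" using psd by (simp add: p_def)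
  have An2: "(norm A)\<^sup>2 \<le> n\<^sup>2 - p / \<alpha>"
  proof -
    have hb: "(norm (H1 *v d))\<^sup>2 \<le> \<alpha> * p"
      unfolding p_def by (rule H_bound[OF \<open>transpose H1 = H1\<close> \<open>loewner_le 0 H1\<close> \<open>loewner_le H1 (\<alpha> *\<^sub>R mat 1)\<close> a])
    have "(norm A)\<^sup>2 = n\<^sup>2 - 2 * p / \<alpha> + (norm (H1 *v d))\<^sup>2 / \<alpha>\<^sup>2"
    proof -
      have "(H1 *v d) \<bullet> d = p" by (simp add: p_def inner_commute)
      have g: "(norm (d - c *\<^sub>R h))\<^sup>2 = (norm d)\<^sup>2 - 2 * c * (d \<bullet> h) + c\<^sup>2 * (norm h)\<^sup>2"
        for c and h :: "real^('h \<times> 'p)"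
        unfolding power2_norm_eq_inner
        by (simp add: inner_diff_left inner_diff_right inner_commute
            power2_eq_square algebra_simps)
      show ?thesis unfolding A_def g nd using a
        by (simp add: p_def power2_eq_square field_simps)
    qed
    also have "\<dots> \<le> n\<^sup>2 - 2 * p / \<alpha> + (\<alpha> * p) / \<alpha>\<^sup>2"
      using hb a by (simp add: divide_right_mono)
    also have "\<dots> = n\<^sup>2 - p / \<alpha>" using a by (simp add: power2_eq_square field_simps)
    finally show ?thesis .
  qed
  have proj: "norm (proj_C C Y - W) \<le> norm (Y - W)"
  proof -
    have "dist (closest_point C Y) (closest_point C W) \<le> dist Y W"
      using closest_point_lipschitz[OF \<open>convex C\<close> \<open>closed C\<close>] \<open>W \<in> C\<close> by blast
    thus ?thesis using closest_point_self[OF \<open>W \<in> C\<close>] by (simp add: proj_C_def dist_norm)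
  qed
  have YW: "norm (Y - W) \<le> norm A + norm B"
  proof -
    have "norm (Y - W) = norm (A - B)" using vY norm_vecm[of "Y - W"] by simp
    thus ?thesis using norm_triangle_ineq4[of A B] by linarith
  qed
  show ?thesis
  proof (cases "U = W")
    case True
    hence "d = 0" "n = 0" by (simp_all add: d_def n_def vecm_def vec_eq_iff)
    hence "norm A = 0" "norm B = 0" by (simp_all add: A_def B_def)
    hence "norm (proj_C C Y - W) = 0" using proj YW by simp
    thus ?thesis using True by (simp add: Y_def)
  next
    case False
    hence npos: "n > 0" by (simp add: n_def)
    define V where "V = (1/n) *\<^sub>R (U - W)"
    have nV: "norm V = 1" using npos by (simp add: V_def n_def)
    have "V \<in> feasible_ball C W"
    proof -
      note nV
      moreover have "V \<in> {a *\<^sub>R V | a V. W + V \<in> C \<and> a \<ge> 0}"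
      proof -
        have "W + (U - W) \<in> C" "1/n \<ge> 0" using \<open>U \<in> C\<close> npos by simp_all
        thus ?thesis unfolding V_def by blast
      qed
      hence "V \<in> closure {a *\<^sub>R V | a V. W + V \<in> C \<and> a \<ge> 0}"
        by (rule subsetD[OF closure_subset])
      moreover have "V \<in> cball 0 1" unfolding mem_cball_0 using nV by (rule eq_refl)
      ultimately show ?thesis unfolding feasible_ball_def by blast
    qed
    moreover have "V \<noteq> 0" using nV by auto
    ultimately have "\<beta> \<le> (vecm V \<bullet> (H1 *v vecm V)) / (norm (vecm V))\<^sup>2"
      using assms(11) by blast
    also have "\<dots> = p / n\<^sup>2"
    proof -
      have "vecm V = (1/n) *\<^sub>R d" by (simp add: V_def d_def vecm_scale)
      thus ?thesis using nd npos
        by (simp add: p_def matrix_vector_mult_scaleR power2_eq_square field_simps)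
    qed
    finally have "\<beta> \<le> p / n\<^sup>2" .
    moreover have "n\<^sup>2 > 0" using npos by simp
    ultimately have bp: "\<beta> * n\<^sup>2 \<le> p" by (simp add: pos_le_divide_eq)
    define x where "x = \<beta> / \<alpha>"
    have A2: "(norm A)\<^sup>2 \<le> (1 - x) * n\<^sup>2"
    proof -
      have "p / \<alpha> \<ge> x * n\<^sup>2" using bp a by (simp add: x_def field_simps)
      thus ?thesis using An2 by (simp add: algebra_simps)
    qed
    have x0: "x \<ge> 0" using eps0 \<open>\<beta> \<ge> 10 * \<epsilon>\<close> a by (simp add: x_def)
    have x1: "x \<le> 1"
    proof -
      have "0 \<le> (norm A)\<^sup>2" by simp
      hence "0 \<le> (1 - x) * n\<^sup>2" using A2 by linarith
      thus ?thesis using npos by (simp add: zero_le_mult_iff)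
    qed
    have Bx: "norm B \<le> x / 10 * n"
    proof -
      have "\<epsilon> / \<alpha> \<le> x / 10" using \<open>\<beta> \<ge> 10 * \<epsilon>\<close> a by (simp add: x_def field_simps)
      hence "\<epsilon> / \<alpha> * n \<le> x / 10 * n" using n0 by (rule mult_right_mono)
      thus ?thesis using Bn by linarith
    qed
    have Al: "norm A \<le> n"
    proof -
      have "(1 - x) * n\<^sup>2 \<le> 1 * n\<^sup>2" using x0 by (intro mult_right_mono) auto
      hence "(norm A)\<^sup>2 \<le> n\<^sup>2" using A2 by linarith
      thus ?thesis by (rule power2_le_imp_le[OF _ n0])
    qed
    have "(norm (proj_C C Y - W))\<^sup>2 \<le> (norm A + norm B)\<^sup>2"
      by (rule power_mono[OF order_trans[OF proj YW] norm_ge_zero])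
    also have "\<dots> = (norm A)\<^sup>2 + 2 * norm A * norm B + (norm B)\<^sup>2" by (simp add: power2_sum)
    also have "\<dots> \<le> (1 - x) * n\<^sup>2 + 2 * n * (x / 10 * n) + (x / 10 * n)\<^sup>2"
    proof -
      have "norm A * norm B \<le> n * (x / 10 * n)" by (rule mult_mono[OF Al Bx n0 norm_ge_zero])
      moreover have "(norm B)\<^sup>2 \<le> (x / 10 * n)\<^sup>2" by (rule power_mono[OF Bx norm_ge_zero])
      ultimately show ?thesis using A2 by linarith
    qed
    also have "\<dots> \<le> (1 - x / 2) * n\<^sup>2"
    proof -
      have "x * x \<le> x * 1" by (rule mult_left_mono[OF x1 x0])
      hence "x\<^sup>2 \<le> x" by (simp add: power2_eq_square)
      hence h: "x\<^sup>2 * n\<^sup>2 \<le> x * n\<^sup>2" by (rule mult_right_mono[OF _ zero_le_power2])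
      have e: "(1 - x) * n\<^sup>2 + 2 * n * (x / 10 * n) + (x / 10 * n)\<^sup>2
            = n\<^sup>2 - (4/5) * (x * n\<^sup>2) + (x\<^sup>2 * n\<^sup>2) / 100"
        by (simp add: power2_eq_square algebra_simps)
      have "x * n\<^sup>2 \<ge> 0" using x0 by simp
      thus ?thesis unfolding e using h by (simp add: algebra_simps)
    qed
    finally have fin: "(norm (proj_C C Y - W))\<^sup>2 \<le> (1 - x / 2) * n\<^sup>2" .
    have "x / 2 = \<beta> / (2 * \<alpha>)" by (simp add: x_def)
    with fin show ?thesis by (simp only: Y_def n_def)
  qed
qed

end
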